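(* Assume every $\nabla f_j$ and $\nabla g_i$ is Lipschitz continuous on $\mathbb{R}^n$ with Lipschitz constant $L$. Consider iteration $k$ of the SQP algorithm, and suppose the solution $(t^k,d^k)$ of $QP(x^k)$ satisfies $d^k\neq 0$ and $\sigma_{k+1}$ has been computed by Step 3. Then there exists $\bar\alpha>0$ such that for every $\alpha\in(0,\bar\alpha]$, $\Psi_{j,\sigma_{k+1}}(x^k+\alpha d^k)-\Psi_{j,\sigma_{k+1}}(x^k)\le \alpha\beta\,\theta_{j,\sigma_{k+1}}(x^k;d^k)$ for all $j=1,\dots,m$.
   Context: $f_j,g_i:\mathbb{R}^n\to\mathbb{R}$ ($j=1,\dots,m$, $i=1,\dots,p$) are continuously differentiable. $\Phi(x)=\max\{0,g_1(x),\dots,g_p(x)\}$; $I(x)=\{i: g_i(x)=\Phi(x)\}$; $\Phi^*(x;d)=\max\{\max_{i\in I(x)}(g_i(x)+\nabla g_i(x)^Td),0\}-\Phi(x)$; $\Psi_{j,\sigma}(x)=f_j(x)+\sigma\Phi(x)$; $\theta_{j,\sigma}(x;d)=\nabla f_j(x)^Td+\sigma\Phi^*(x;d)$. $QP(x)$: minimize $t+\frac12 d^Td$ over $(t,d)\in\mathbb{R}\times\mathbb{R}^n$ subject to $\nabla f_j(x)^Td\le t$ for all $j$ and $g_i(x)+\nabla g_i(x)^Td\le t$ for all $i$ (unique solution). SQP algorithm: choose $x^0\in\mathbb{R}^n$, $r\in(0,1)$, $\beta\in(0,1)$, $\sigma_0>0$; set $k=0$. Step 2: let $(t^k,d^k)$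 solve $QP(x^k)$; stop if $d^k=0$. Step 3: if $\Phi(x^k)=0$ or $\theta_{j,\sigma_k}(x^k;d^k)\le-\frac12 (d^k)^Td^k$ for all $j$, set $\sigma_{k+1}=\sigma_k$; otherwise set $\sigma_{k+1}=\max\{2\sigma_k,\ (\nabla f_j(x^k)^Td^k+\frac12(d^k)^Td^k)/(-\Phi^*(x^k;d^k)),\ j=1,\dots,m\}$. Step 4: let $\alpha_k$ be the first number in $\{1,r,r^2,\dots\}$ with $\Psi_{j,\sigma_{k+1}}(x^k+\alpha_kd^k)-\Psi_{j,\sigma_{k+1}}(x^k)\le\alpha_k\beta\,\theta_{j,\sigma_{k+1}}(x^k;d^k)$ for all $j$. Step 5: $x^{k+1}=x^k+\alpha_kd^k$, $k:=k+1$, go to Step 2. *)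

theory Defs
  imports "HOL-Analysis.Analysis"
begin

text \<open>Objectives f j (j = 1..m), constraints g i (i = 1..p) on real^'n, with gradient
  functions gf j and gg i.\<close>

definition Phi :: "nat \<Rightarrow> (nat \<Rightarrow> real^'n \<Rightarrow> real) \<Rightarrow> real^'n \<Rightarrow> real" where
  "Phi p g x = Max (insert 0 {g i x | i. i \<in> {1..p}})"

definition Iact :: "nat \<Rightarrow> (nat \<Rightarrow> real^'n \<Rightarrow> real) \<Rightarrow> real^'n \<Rightarrow> nat set" where
  "Iact p g x = {i \<in> {1..p}. g i x = Phi p g x}"

definition Phistar :: "nat \<Rightarrow> (nat \<Rightarrow> real^'n \<Rightarrow> real) \<Rightarrow> (nat \<Rightarrow> real^'n \<Rightarrow> real^'n)
    \<Rightarrow> real^'n \<Rightarrow> real^'n \<Rightarrow> real" where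
  "Phistar p g gg x d =
     Max (insert 0 {g i x + gg i x \<bullet> d | i. i \<in> Iact p g x}) - Phi p g x"

definition Psi :: "nat \<Rightarrow> (nat \<Rightarrow> real^'n \<Rightarrow> real) \<Rightarrow> (nat \<Rightarrow> real^'n \<Rightarrow> real) \<Rightarrow> nat
    \<Rightarrow> real \<Rightarrow> real^'n \<Rightarrow> real" where
  "Psi p f g j \<sigma> x = f j x + \<sigma> * Phi p g x"

definition theta :: "nat \<Rightarrow> (nat \<Rightarrow> real^'n \<Rightarrow> real^'n) \<Rightarrow> (nat \<Rightarrow> real^'n \<Rightarrow> real)
    \<Rightarrow> (nat \<Rightarrow> real^'n \<Rightarrow> real^'n) \<Rightarrow> nat \<Rightarrow> real \<Rightarrow> real^'n \<Rightarrow> real^'n \<Rightarrow> real" where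
  "theta p gf g gg j \<sigma> x d = gf j x \<bullet> d + \<sigma> * Phistar p g gg x d"

definition QP_feasible :: "nat \<Rightarrow> nat \<Rightarrow> (nat \<Rightarrow> real^'n \<Rightarrow> real^'n) \<Rightarrow> (nat \<Rightarrow> real^'n \<Rightarrow> real)
    \<Rightarrow> (nat \<Rightarrow> real^'n \<Rightarrow> real^'n) \<Rightarrow> real^'n \<Rightarrow> real \<Rightarrow> real^'n \<Rightarrow> bool" where
  "QP_feasible m p gf g gg x t d \<longleftrightarrow>
     (\<forall>j\<in>{1..m}. gf j x \<bullet> d \<le> t) \<and> (\<forall>i\<in>{1..p}. g i x + gg i x \<bullet> d \<le> t)"

definition QP_solution :: "nat \<Rightarrow> nat \<Rightarrow> (nat \<Rightarrow> real^'n \<Rightarrow> real^'n) \<Rightarrow> (nat \<Rightarrow> real^'n \<Rightarrow> real)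
    \<Rightarrow> (nat \<Rightarrow> real^'n \<Rightarrow> real^'n) \<Rightarrow> real^'n \<Rightarrow> real \<Rightarrow> real^'n \<Rightarrow> bool" where
  "QP_solution m p gf g gg x t d \<longleftrightarrow>
     QP_feasible m p gf g gg x t d \<and>
     (\<forall>t' d'. QP_feasible m p gf g gg x t' d' \<longrightarrow> t + (1/2) * (d \<bullet> d) \<le> t' + (1/2) * (d' \<bullet> d'))"

definition sigma_update :: "nat \<Rightarrow> nat \<Rightarrow> (nat \<Rightarrow> real^'n \<Rightarrow> real^'n) \<Rightarrow> (nat \<Rightarrow> real^'n \<Rightarrow> real)
    \<Rightarrow> (nat \<Rightarrow> real^'n \<Rightarrow> real^'n) \<Rightarrow> real^'n \<Rightarrow> real^'n \<Rightarrow> real \<Rightarrow> real" where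
  "sigma_update m p gf g gg x d \<sigma> =
     (if Phi p g x = 0 \<or> (\<forall>j\<in>{1..m}. theta p gf g gg j \<sigma> x d \<le> - (1/2) * (d \<bullet> d))
      then \<sigma>
      else Max (insert (2 * \<sigma>)
             {(gf j x \<bullet> d + (1/2) * (d \<bullet> d)) / (- Phistar p g gg x d) | j. j \<in> {1..m}}))"

end

theory Submission
  imports Defs
begin
lemma descent:
  fixes h :: "real^'n \<Rightarrow> real" and gh :: "real^'n \<Rightarrow> real^'n"
  assumes gd: "\<And>y. GDERIV h y :> gh y" and lip: "L-lipschitz_on UNIV gh" and a: "0 \<le> \<alpha>"
  shows "h (x + \<alpha> *\<^sub>R d) \<le> h x + \<alpha> * (gh x \<bullet> d) + L * \<alpha>^2 * (d \<bullet> d)"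
proof (cases "\<alpha> = 0")
  case True then show ?thesis by simp
next
  case False
  with a have a0: "0 < \<alpha>" by simp
  have L0: "0 \<le> L" using lipschitz_on_nonneg[OF lip] .
  have der: "DERIV (\<lambda>s. h (x + s *\<^sub>R d)) s :> gh (x + s *\<^sub>R d) \<bullet> d" for s
  proof -
    have 1: "((\<lambda>s. x + s *\<^sub>R d) has_derivative (\<lambda>s. s *\<^sub>R d)) (at s)"
      by (auto intro!: derivative_eq_intros)
    have 2: "(h has_derivative (\<lambda>v. v \<bullet> gh (x + s *\<^sub>R d))) (at (x + s *\<^sub>R d))"
      using gd[of "x + s *\<^sub>R d"] by (simp add: gderiv_def)
    have "((\<lambda>s. h (x + s *\<^sub>R d)) has_derivative (\<lambda>v. (v *\<^sub>R d) \<bullet> gh (x + s *\<^sub>R d))) (at s)"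
      using has_derivative_compose[OF 1 2] by (simp add: o_def)
    then show ?thesis
    proof -
      have "(\<lambda>v. v * (d \<bullet> gh (x + s *\<^sub>R d))) = (*) (gh (x + s *\<^sub>R d) \<bullet> d)"
        by (auto simp: inner_commute)
      thus ?thesis using \<open>((\<lambda>s. h (x + s *\<^sub>R d)) has_derivative _) _\<close>
        by (simp add: has_field_derivative_def)
    qed
  qed
  obtain z where z: "0 < z" "z < \<alpha>"
    and eq: "h (x + \<alpha> *\<^sub>R d) - h (x + 0 *\<^sub>R d) = (\<alpha> - 0) * (gh (x + z *\<^sub>R d) \<bullet> d)"
    using MVT2[OF a0, of "\<lambda>s. h (x + s *\<^sub>R d)" "\<lambda>s. gh (x + s *\<^sub>R d) \<bullet> d", OF der] by blast
  have "gh (x + z *\<^sub>R d) \<bullet> d - gh x \<bullet> d = (gh (x + z *\<^sub>R d) - gh x) \<bullet> d"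
    by (simp add: inner_diff_left)
  also have "\<dots> \<le> norm (gh (x + z *\<^sub>R d) - gh x) * norm d"
    by (rule order_trans[OF abs_ge_self Cauchy_Schwarz_ineq2])
  also have "norm (gh (x + z *\<^sub>R d) - gh x) \<le> L * (z * norm d)"
    using lipschitz_onD[OF lip, of "x + z *\<^sub>R d" x] z by (simp add: dist_norm)
  hence "norm (gh (x + z *\<^sub>R d) - gh x) * norm d \<le> L * (z * norm d) * norm d"
    by (simp add: mult_right_mono)
  also have "\<dots> = L * z * (d \<bullet> d)" by (simp add: power2_norm_eq_inner[symmetric] power2_eq_square)
  also have "\<dots> \<le> L * \<alpha> * (d \<bullet> d)"
    using z L0 by (intro mult_right_mono mult_left_mono) auto
  finally have "gh (x + z *\<^sub>R d) \<bullet> d \<le> gh x \<bullet> d + L * \<alpha> * (d \<bullet> d)" by simp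
  hence "\<alpha> * (gh (x + z *\<^sub>R d) \<bullet> d) \<le> \<alpha> * (gh x \<bullet> d + L * \<alpha> * (d \<bullet> d))"
    using a0 by (simp add: mult_left_mono)
  with eq show ?thesis by (simp add: algebra_simps power2_eq_square)
qed

lemma Phi_set: "{g i x | i. i \<in> {1..p}} = (\<lambda>i. g i x) ` {1..p}" by auto

lemma Phi_ge0: "0 \<le> Phi p g x"
  unfolding Phi_def Phi_set by (rule Max_ge) auto

lemma Phi_ge: "i \<in> {1..p} \<Longrightarrow> g i x \<le> Phi p g x"
  unfolding Phi_def Phi_set by (rule Max_ge) auto

lemma Phi_le: "0 \<le> c \<Longrightarrow> (\<And>i. i \<in> {1..p} \<Longrightarrow> g i x \<le> c) \<Longrightarrow> Phi p g x \<le> c"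
  unfolding Phi_def Phi_set by (subst Max_le_iff) auto

lemma Iact_sub: "Iact p g x \<subseteq> {1..p}" by (auto simp: Iact_def)

lemma M_set: "{g i x + gg i x \<bullet> d | i. i \<in> Iact p g x} = (\<lambda>i. g i x + gg i x \<bullet> d) ` Iact p g x" by auto

lemma fin_Iact: "finite (Iact p g x)" by (rule finite_subset[OF Iact_sub]) simp

lemma M_ge0: "0 \<le> Phistar p g gg x d + Phi p g x"
  unfolding Phistar_def M_set by (simp, rule Max_ge) (auto simp: fin_Iact)

lemma M_ge: "i \<in> Iact p g x \<Longrightarrow> g i x + gg i x \<bullet> d \<le> Phistar p g gg x d + Phi p g x"
  unfolding Phistar_def M_set by (simp, rule Max_ge) (auto simp: fin_Iact)

lemma M_le: "0 \<le> c \<Longrightarrow> (\<And>i. i \<in> Iact p g x \<Longrightarrow> g i x + gg i x \<bullet> d \<le> c) \<Longrightarrow> Phistar p g gg x d + Phi p g x \<le> c"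
  unfolding Phistar_def M_set by (simp, subst Max_le_iff) (auto simp: fin_Iact)

lemma Phi_bound:
  fixes g :: "nat \<Rightarrow> real^'n \<Rightarrow> real" and gg :: "nat \<Rightarrow> real^'n \<Rightarrow> real^'n"
  assumes grad_g: "\<And>i x. i \<in> {1..p} \<Longrightarrow> GDERIV (g i) x :> gg i x"
    and lip_g: "\<And>i. i \<in> {1..p} \<Longrightarrow> L-lipschitz_on UNIV (gg i)"
    and L0: "0 \<le> L"
  shows "\<forall>\<^sub>F \<alpha> in at_right 0. Phi p g (x + \<alpha> *\<^sub>R d) \<le> Phi p g x + \<alpha> * Phistar p g gg x d + L * \<alpha>^2 * (d \<bullet> d)"
proof -
  define \<Phi> where "\<Phi> = Phi p g x"
  define M where "M = Phistar p g gg x d + Phi p g x"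
  have pos: "\<forall>\<^sub>F \<alpha> in at_right (0::real). 0 < \<alpha> \<and> \<alpha> \<le> 1"
    unfolding eventually_at_right_field by (intro exI[of _ 1]) auto
  have each: "\<forall>\<^sub>F \<alpha> in at_right 0. \<forall>i\<in>{1..p}. g i (x + \<alpha> *\<^sub>R d) \<le> (1-\<alpha>)*\<Phi> + \<alpha>*M + L * \<alpha>^2 * (d \<bullet> d)"
  proof (rule eventually_ball_finite, simp, rule ballI)
    fix i assume i: "i \<in> {1..p}"
    have desc: "\<And>\<alpha>. 0 \<le> \<alpha> \<Longrightarrow> g i (x + \<alpha> *\<^sub>R d) \<le> g i x + \<alpha> * (gg i x \<bullet> d) + L * \<alpha>^2 * (d \<bullet> d)"
      by (rule descent[OF grad_g[OF i] lip_g[OF i]])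
    show "\<forall>\<^sub>F \<alpha> in at_right 0. g i (x + \<alpha> *\<^sub>R d) \<le> (1-\<alpha>)*\<Phi> + \<alpha>*M + L * \<alpha>^2 * (d \<bullet> d)"
    proof (cases "i \<in> Iact p g x")
      case True
      have e1: "g i x = \<Phi>" using True by (simp add: Iact_def \<Phi>_def)
      have e2: "g i x + gg i x \<bullet> d \<le> M" using M_ge[OF True] by (simp add: M_def)
      show ?thesis using pos
      proof (rule eventually_mono)
        fix \<alpha> :: real assume a: "0 < \<alpha> \<and> \<alpha> \<le> 1"
        have "\<alpha> * (g i x + gg i x \<bullet> d) \<le> \<alpha> * M" using a e2 by (simp add: mult_left_mono)
        then show "g i (x + \<alpha> *\<^sub>R d) \<le> (1-\<alpha>)*\<Phi> + \<alpha>*M + L * \<alpha>^2 * (d \<bullet> d)"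
          using desc[of \<alpha>] a e1 by (simp add: algebra_simps)
      qed
    next
      case False
      have lt: "g i x < \<Phi>" using False Phi_ge[OF i, of g x] i by (auto simp: Iact_def \<Phi>_def)
      have "((\<lambda>\<alpha>. \<Phi> - g i x + \<alpha> * (M - \<Phi> - gg i x \<bullet> d)) \<longlongrightarrow> \<Phi> - g i x + 0 * (M - \<Phi> - gg i x \<bullet> d)) (at_right 0)"
        by (intro tendsto_intros)
      hence "\<forall>\<^sub>F \<alpha> in at_right 0. 0 < \<Phi> - g i x + \<alpha> * (M - \<Phi> - gg i x \<bullet> d)"
        using lt by (intro order_tendstoD) auto
      with pos show ?thesis
      proof (rule eventually_elim2)
        fix \<alpha> :: real assume a: "0 < \<alpha> \<and> \<alpha> \<le> 1" and b: "0 < \<Phi> - g i x + \<alpha> * (M - \<Phi> - gg i x \<bullet> d)"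
        show "g i (x + \<alpha> *\<^sub>R d) \<le> (1-\<alpha>)*\<Phi> + \<alpha>*M + L * \<alpha>^2 * (d \<bullet> d)"
          using desc[of \<alpha>] a b by (simp add: algebra_simps)
      qed
    qed
  qed
  from each pos show ?thesis
  proof (rule eventually_elim2)
    fix \<alpha> :: real assume e: "\<forall>i\<in>{1..p}. g i (x + \<alpha> *\<^sub>R d) \<le> (1-\<alpha>)*\<Phi> + \<alpha>*M + L * \<alpha>^2 * (d \<bullet> d)"
      and a: "0 < \<alpha> \<and> \<alpha> \<le> 1"
    have "0 \<le> \<Phi>" "0 \<le> M" using Phi_ge0 M_ge0 by (auto simp: \<Phi>_def M_def)
    hence "0 \<le> (1-\<alpha>)*\<Phi> + \<alpha>*M + L * \<alpha>^2 * (d \<bullet> d)" using a L0 by simp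
    hence "Phi p g (x + \<alpha> *\<^sub>R d) \<le> (1-\<alpha>)*\<Phi> + \<alpha>*M + L * \<alpha>^2 * (d \<bullet> d)"
      using e by (intro Phi_le) auto
    thus "Phi p g (x + \<alpha> *\<^sub>R d) \<le> Phi p g x + \<alpha> * Phistar p g gg x d + L * \<alpha>^2 * (d \<bullet> d)"
      by (simp add: \<Phi>_def M_def algebra_simps)
  qed
qed


theorem mainTheorem3:
  fixes m p :: nat
    and f g :: "nat \<Rightarrow> real^'n \<Rightarrow> real"
    and gf gg :: "nat \<Rightarrow> real^'n \<Rightarrow> real^'n"
    and L \<beta> \<sigma>k tk :: real
    and xk dk :: "real^'n"
  assumes grad_f: "\<And>j x. j \<in> {1..m} \<Longrightarrow> GDERIV (f j) x :> gf j x"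
    and grad_g: "\<And>i x. i \<in> {1..p} \<Longrightarrow> GDERIV (g i) x :> gg i x"
    and lip_f: "\<And>j. j \<in> {1..m} \<Longrightarrow> L-lipschitz_on UNIV (gf j)"
    and lip_g: "\<And>i. i \<in> {1..p} \<Longrightarrow> L-lipschitz_on UNIV (gg i)"
    and beta: "0 < \<beta>" "\<beta> < 1"
    and sigma_pos: "0 < \<sigma>k"
    and qp: "QP_solution m p gf g gg xk tk dk"
    and dk_nz: "dk \<noteq> 0"
  shows "\<exists>\<alpha>bar>0. \<forall>\<alpha>. 0 < \<alpha> \<and> \<alpha> \<le> \<alpha>bar \<longrightarrow>
           (\<forall>j\<in>{1..m}.
              Psi p f g j (sigma_update m p gf g gg xk dk \<sigma>k) (xk + \<alpha> *\<^sub>R dk)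
                - Psi p f g j (sigma_update m p gf g gg xk dk \<sigma>k) xk
              \<le> \<alpha> * \<beta> * theta p gf g gg j (sigma_update m p gf g gg xk dk \<sigma>k) xk dk)"
proof (cases "m = 0")
  case True
  then show ?thesis by (intro exI[of _ 1]) auto
next
  case False
  hence "1 \<in> {1..m}" by simp
  hence L0: "0 \<le> L" using lip_f lipschitz_on_nonneg by blast
  define \<sigma> where "\<sigma> = sigma_update m p gf g gg xk dk \<sigma>k"
  define dd where "dd = dk \<bullet> dk"
  have dd0: "0 < dd" using dk_nz by (simp add: dd_def)
  have feas_f: "\<And>j. j \<in> {1..m} \<Longrightarrow> gf j xk \<bullet> dk \<le> tk"
    and feas_g: "\<And>i. i \<in> {1..p} \<Longrightarrow> g i xk + gg i xk \<bullet> dk \<le> tk"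
    using qp by (auto simp: QP_solution_def QP_feasible_def)
  have "QP_feasible m p gf g gg xk (Phi p g xk) 0"
    using Phi_ge[of _ p g xk] Phi_ge0[of p g xk] by (auto simp: QP_feasible_def)
  hence opt: "tk + (1/2) * dd \<le> Phi p g xk"
    using qp unfolding QP_solution_def dd_def by (metis inner_zero_left mult_zero_right add_0_right)
  have key: "0 < \<sigma> \<and> (\<forall>j\<in>{1..m}. theta p gf g gg j \<sigma> xk dk \<le> - (1/2) * dd)"
  proof (cases "Phi p g xk = 0")
    case True
    hence s: "\<sigma> = \<sigma>k" by (simp add: \<sigma>_def sigma_update_def)
    have tneg: "tk < 0" using opt dd0 True by simp
    have "Phistar p g gg xk dk + Phi p g xk \<le> 0"
      by (rule M_le) (use feas_g tneg Iact_sub in force)+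
    hence ps: "Phistar p g gg xk dk = 0" using M_ge0[of p g gg xk dk] True by simp
    have "gf j xk \<bullet> dk \<le> - (1/2) * dd" if "j \<in> {1..m}" for j
      using feas_f[OF that] opt True by linarith
    thus ?thesis using s sigma_pos ps by (auto simp: theta_def)
  next
    case F: False
    show ?thesis
    proof (cases "\<forall>j\<in>{1..m}. theta p gf g gg j \<sigma>k xk dk \<le> - (1/2) * (dk \<bullet> dk)")
      case True
      thus ?thesis using sigma_pos by (simp add: \<sigma>_def sigma_update_def dd_def)
    next
      case False
      define S where "S = {(gf j xk \<bullet> dk + (1/2) * (dk \<bullet> dk)) / (- Phistar p g gg xk dk) | j. j \<in> {1..m}}"
      have c: "\<not> (Phi p g xk = 0 \<or> (\<forall>j\<in>{1..m}. theta p gf g gg j \<sigma>k xk dk \<le> - (1/2) * (dk \<bullet> dk)))"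
        using F False by blast
      have s: "\<sigma> = Max (insert (2 * \<sigma>k) S)" unfolding \<sigma>_def sigma_update_def S_def by (rule if_not_P[OF c])
      have finS: "finite S" unfolding S_def by (simp add: setcompr_eq_image)
      have Ppos: "0 < Phi p g xk" using F Phi_ge0[of p g xk] by simp
      have "Phistar p g gg xk dk + Phi p g xk \<le> max 0 tk"
        by (rule M_le) (use feas_g Iact_sub in force)+
      moreover have "max 0 tk < Phi p g xk" using Ppos opt dd0 by simp
      ultimately have psneg: "Phistar p g gg xk dk < 0" by linarith
      have s1: "2 * \<sigma>k \<le> \<sigma>" unfolding s using finS by simp
      have s2: "\<And>j. j \<in> {1..m} \<Longrightarrow> (gf j xk \<bullet> dk + (1/2) * dd) / (- Phistar p g gg xk dk) \<le> \<sigma>"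
        unfolding s dd_def using finS by (intro Max_ge) (auto simp: S_def)
      have "theta p gf g gg j \<sigma> xk dk \<le> - (1/2) * dd" if j: "j \<in> {1..m}" for j
      proof -
        have "gf j xk \<bullet> dk + (1/2) * dd \<le> \<sigma> * (- Phistar p g gg xk dk)"
          using s2[OF j] psneg pos_divide_le_eq[of "- Phistar p g gg xk dk" "gf j xk \<bullet> dk + (1/2) * dd" \<sigma>]
          by simp
        thus ?thesis by (simp add: theta_def algebra_simps)
      qed
      thus ?thesis using s1 sigma_pos by auto
    qed
  qed
  have spos: "0 < \<sigma>" using key by simp
  have ev1: "\<forall>\<^sub>F \<alpha> in at_right (0::real). 0 < \<alpha>"
    unfolding eventually_at_right_field by (intro exI[of _ 1]) auto
  have ev2: "\<forall>\<^sub>F \<alpha> in at_right 0. Phi p g (xk + \<alpha> *\<^sub>R dk) \<le> Phi p g xk + \<alpha> * Phistar p g gg xk dk + L * \<alpha>^2 * (dk \<bullet> dk)"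
    apply (rule Phi_bound)
      apply (erule grad_g)
     apply (erule lip_g)
    apply (rule L0)
    done
  have "((\<lambda>\<alpha>. \<alpha> * ((1 + \<sigma>) * L * dd)) \<longlongrightarrow> 0 * ((1 + \<sigma>) * L * dd)) (at_right 0)"
    by (intro tendsto_intros)
  hence ev3: "\<forall>\<^sub>F \<alpha> in at_right 0. \<alpha> * ((1 + \<sigma>) * L * dd) < (1 - \<beta>) * ((1/2) * dd)"
    using beta dd0 by (intro order_tendstoD) auto
  have "\<forall>\<^sub>F \<alpha> in at_right 0. (\<forall>j\<in>{1..m}.
              Psi p f g j \<sigma> (xk + \<alpha> *\<^sub>R dk) - Psi p f g j \<sigma> xk
              \<le> \<alpha> * \<beta> * theta p gf g gg j \<sigma> xk dk)"
    using ev1 ev2 ev3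
  proof eventually_elim
    case (elim \<alpha>)
    show ?case
    proof
      fix j assume j: "j \<in> {1..m}"
      define th where "th = theta p gf g gg j \<sigma> xk dk"
      have thb: "th \<le> - (1/2) * dd" using key j by (simp add: th_def)
      have df: "f j (xk + \<alpha> *\<^sub>R dk) \<le> f j xk + \<alpha> * (gf j xk \<bullet> dk) + L * \<alpha>^2 * dd"
        using descent[OF grad_f[OF j] lip_f[OF j], of \<alpha> xk dk] elim by (simp add: dd_def)
      have dp: "\<sigma> * Phi p g (xk + \<alpha> *\<^sub>R dk) \<le> \<sigma> * (Phi p g xk + \<alpha> * Phistar p g gg xk dk + L * \<alpha>^2 * dd)"
        using mult_left_mono[OF elim(2) less_imp_le[OF spos]] by (simp add: dd_def)
      have "Psi p f g j \<sigma> (xk + \<alpha> *\<^sub>R dk) - Psi p f g j \<sigma> xk \<le> \<alpha> * th + \<alpha> * (\<alpha> * ((1 + \<sigma>) * L * dd))"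
      proof -
        have eq: "\<alpha> * th + \<alpha> * (\<alpha> * ((1 + \<sigma>) * L * dd)) =
           \<alpha> * (gf j xk \<bullet> dk) + L * \<alpha>^2 * dd + (\<sigma> * (\<alpha> * Phistar p g gg xk dk) + \<sigma> * (L * \<alpha>^2 * dd))"
          by (simp add: th_def theta_def algebra_simps power2_eq_square)
        have eq2: "\<sigma> * (Phi p g xk + \<alpha> * Phistar p g gg xk dk + L * \<alpha>^2 * dd) =
           \<sigma> * Phi p g xk + (\<sigma> * (\<alpha> * Phistar p g gg xk dk) + \<sigma> * (L * \<alpha>^2 * dd))"
          by (simp add: algebra_simps)
        show ?thesis unfolding Psi_def eq using df dp eq2 by linarith
      qed
      also have "\<dots> \<le> \<alpha> * th + \<alpha> * ((1 - \<beta>) * ((1/2) * dd))"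
        using elim by (intro add_left_mono mult_left_mono) auto
      also have "\<dots> \<le> \<alpha> * th + \<alpha> * ((1 - \<beta>) * (- th))"
        using elim beta thb by (intro add_left_mono mult_left_mono) auto
      also have "\<dots> = \<alpha> * \<beta> * th" by (simp add: algebra_simps)
      finally show "Psi p f g j \<sigma> (xk + \<alpha> *\<^sub>R dk) - Psi p f g j \<sigma> xk \<le> \<alpha> * \<beta> * theta p gf g gg j \<sigma> xk dk"
        by (simp add: th_def)
    qed
  qed
  then obtain b where b: "b > 0" and hb: "\<And>\<alpha>. \<alpha> > 0 \<Longrightarrow> \<alpha> < b \<Longrightarrow> (\<forall>j\<in>{1..m}.
              Psi p f g j \<sigma> (xk + \<alpha> *\<^sub>R dk) - Psi p f g j \<sigma> xk
              \<le> \<alpha> * \<beta> * theta p gf g gg j \<sigma> xk dk)"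
    unfolding eventually_at_right_field by auto
  show ?thesis unfolding \<sigma>_def[symmetric]
  proof (intro exI[of _ "b/2"] conjI allI impI)
    show "0 < b/2" using b by simp
  next
    fix \<alpha> :: real assume a: "0 < \<alpha> \<and> \<alpha> \<le> b/2"
    hence "\<alpha> < b" using b by linarith
    thus "\<forall>j\<in>{1..m}. Psi p f g j \<sigma> (xk + \<alpha> *\<^sub>R dk) - Psi p f g j \<sigma> xk
              \<le> \<alpha> * \<beta> * theta p gf g gg j \<sigma> xk dk" using hb a by blast
  qed
qed

end
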